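(* Let $u:\mathbb{R}_{\ge 0}\to[0,1]$ be non-increasing with $u(0)=1$ and $\lim_{t\to\infty}u(t)=0$, and let there be $n$ algorithms with runtime distributions $\mathcal{D}_1,\dots,\mathcal{D}_n$ and expected utilities $U_i=\mathbb{E}_{t\sim\mathcal{D}_i}[u(t)]$. Given $\epsilon,\delta\in(0,1)$ and a captime $\kappa$ with $u(\kappa)<\epsilon$, the Naive procedure sets $m=\Big\lceil\frac{2\ln(2n/\delta)}{(\epsilon-u(\kappa))^2}\Big\rceil$, runs each algorithm $i$ on $m$ instances at captime $\kappa$, obtaining independent capped samples $t_{ij}(\kappa)=\min(t_{ij},\kappa)$ with $t_{ij}\sim\mathcal{D}_i$, computes $\widehat{U}_{im}(\kappa)=\frac1m\sum_{j=1}^m u(t_{ij}(\kappa))$, and returns $i^*\in\arg\max_i\widehat{U}_{im}(\kappa)$. Then with probability at least $1-\delta$ the Naive procedure returns an $\epsilon$-optimal algorithm, and the number $m$ of $\kappa$-capped samples it takes of each algorithm satisfies $$2\sqrt{\frac{\ln(2n/\delta)}{2m}}+u(\kappa)\le\epsilon.$$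
   Context: The runtime distribution $\mathcal{D}_i$ of algorithm $i$ is induced by drawing instances i.i.d. from a fixed instance distribution (and any internal randomness). An algorithm $i^*$ is $\epsilon$-optimal if $U_{i^*}\ge\max_iU_i-\epsilon$. *)

theory Defs
  imports "HOL-Probability.Probability"
begin

definition runtime_space :: "real measure" where
  "runtime_space = restrict_space borel {0..}"

definition exp_utility :: "(real \<Rightarrow> real) \<Rightarrow> real measure \<Rightarrow> real" where
  "exp_utility u D = (\<integral>t. u t \<partial>D)"

definition emp_utility :: "(real \<Rightarrow> real) \<Rightarrow> real \<Rightarrow> nat \<Rightarrow> (nat \<Rightarrow> nat \<Rightarrow> 'a \<Rightarrow> real) \<Rightarrow> nat \<Rightarrow> 'a \<Rightarrow> real" where
  "emp_utility u \<kappa> m T i \<omega> = (\<Sum>j<m. u (min (T i j \<omega>) \<kappa>)) / real m"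

end

theory Submission imports Defs begin

lemma sum_single_prod: "(\<Sum>p\<in>{i}\<times>A. f p) = (\<Sum>j\<in>A. f (i, j))"
proof -
  have "{i}\<times>A = (\<lambda>j. (i,j)) ` A" by auto
  moreover have "inj_on (\<lambda>j. (i,j)) A" by (auto simp: inj_on_def)
  ultimately show ?thesis by (simp add: sum.reindex)
qed

lemma space_runtime: "space runtime_space = {0..}"
  by (simp add: runtime_space_def space_restrict_space)

lemma hoeff_one:
  fixes M :: "'a measure" and T :: "nat \<Rightarrow> nat \<Rightarrow> 'a \<Rightarrow> real" and g :: "real \<Rightarrow> real"
  assumes MP: "prob_space M"
    and ind: "prob_space.indep_vars M (\<lambda>_. runtime_space) (\<lambda>(i, j). T i j) ({..<n}\<times>{..<m})"
    and i: "i < n" and m: "m > 0"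
    and g_meas: "g \<in> borel_measurable runtime_space"
    and g_bnd: "\<And>t. t \<ge> 0 \<Longrightarrow> 0 \<le> g t \<and> g t \<le> 1"
    and e: "e \<ge> 0"
  shows "measure M {\<omega>\<in>space M. (\<Sum>j<m. g (T i j \<omega>)) \<ge> (\<Sum>j<m. prob_space.expectation M (\<lambda>\<omega>. g (T i j \<omega>))) + e} \<le> exp (-2*e^2/m)"
    and "measure M {\<omega>\<in>space M. (\<Sum>j<m. g (T i j \<omega>)) \<le> (\<Sum>j<m. prob_space.expectation M (\<lambda>\<omega>. g (T i j \<omega>))) - e} \<le> exp (-2*e^2/m)"
proof -
  interpret prob_space M by (rule MP)
  define I where "I = {i}\<times>{..<m}"
  have sub: "I \<subseteq> {..<n}\<times>{..<m}" using i by (auto simp: I_def)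
  have ind2: "indep_vars (\<lambda>_. borel) (\<lambda>p x. g ((\<lambda>(i, j). T i j) p x)) I"
    by (rule indep_vars_compose2[OF indep_vars_subset[OF ind sub]]) (rule g_meas)
  define X where "X = (\<lambda>p x. g ((\<lambda>(i, j). T i j) p x))"
  have rv: "p \<in> I \<Longrightarrow> (\<lambda>(i, j). T i j) p \<in> measurable M runtime_space" for p
    using indep_vars_subset[OF ind sub] unfolding indep_vars_def by blast
  interpret H: Hoeffding_ineq M I X "\<lambda>_. 0" "\<lambda>_. 1" "\<Sum>p\<in>I. expectation (X p)"
  proof (unfold_locales)
    show "finite I" by (simp add: I_def)
    show "indep_vars (\<lambda>_. borel) X I" using ind2 by (simp add: X_def)
    fix p assume p: "p \<in> I"
    show "AE x in M. X p x \<in> {0..1}"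
    proof (rule AE_I2)
      fix x assume x: "x \<in> space M"
      have "(\<lambda>(i, j). T i j) p x \<in> space runtime_space"
        using measurable_space[OF rv[OF p] x] .
      then show "X p x \<in> {0..1}" using g_bnd by (auto simp: X_def space_runtime)
    qed
  qed simp
  have pos: "(\<Sum>p\<in>I. (1 - 0::real)\<^sup>2) > 0" using m by (simp add: I_def)
  have cI: "(\<Sum>p\<in>I. (1 - 0::real)\<^sup>2) = real m" by (simp add: I_def)
  have sX: "(\<Sum>p\<in>I. X p x) = (\<Sum>j<m. g (T i j x))" for x
    by (simp add: I_def sum_single_prod X_def)
  have sE: "(\<Sum>p\<in>I. expectation (X p)) = (\<Sum>j<m. expectation (\<lambda>\<omega>. g (T i j \<omega>)))"
    by (simp add: I_def sum_single_prod X_def)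
  show "measure M {\<omega>\<in>space M. (\<Sum>j<m. g (T i j \<omega>)) \<ge> (\<Sum>j<m. expectation (\<lambda>\<omega>. g (T i j \<omega>))) + e} \<le> exp (-2*e^2/m)"
    using H.Hoeffding_ineq_ge[OF e pos] unfolding cI sX sE .
  show "measure M {\<omega>\<in>space M. (\<Sum>j<m. g (T i j \<omega>)) \<le> (\<Sum>j<m. expectation (\<lambda>\<omega>. g (T i j \<omega>))) - e} \<le> exp (-2*e^2/m)"
    using H.Hoeffding_ineq_le[OF e pos] unfolding cI sX sE .
qed

theorem theorem3:
  fixes u :: "real \<Rightarrow> real" and n m :: nat and \<epsilon> \<delta> \<kappa> :: real
    and D :: "nat \<Rightarrow> real measure"
    and M :: "'a measure" and T :: "nat \<Rightarrow> nat \<Rightarrow> 'a \<Rightarrow> real"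
  assumes u_range: "\<And>t. t \<ge> 0 \<Longrightarrow> 0 \<le> u t \<and> u t \<le> 1"
    and u_mono: "\<And>s t. 0 \<le> s \<Longrightarrow> s \<le> t \<Longrightarrow> u t \<le> u s"
    and u_0: "u 0 = 1"
    and u_lim: "(u \<longlongrightarrow> 0) at_top"
    and n_pos: "n \<ge> 1"
    and D_prob: "\<And>i. i < n \<Longrightarrow> prob_space (D i)"
    and D_sets: "\<And>i. i < n \<Longrightarrow> sets (D i) = sets runtime_space"
    and eps: "0 < \<epsilon>" "\<epsilon> < 1"
    and delta: "0 < \<delta>" "\<delta> < 1"
    and kappa: "\<kappa> \<ge> 0" "u \<kappa> < \<epsilon>"
    and m_def: "m = nat \<lceil>2 * ln (2 * real n / \<delta>) / (\<epsilon> - u \<kappa>)^2\<rceil>"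
    and M_prob: "prob_space M"
    and T_indep: "prob_space.indep_vars M (\<lambda>_. runtime_space) (\<lambda>(i, j). T i j)
                    ({..<n} \<times> {..<m})"
    and T_distr: "\<And>i j. i < n \<Longrightarrow> j < m \<Longrightarrow> distr M runtime_space (T i j) = D i"
  shows "measure M {\<omega> \<in> space M. \<forall>i\<^sub>s < n.
              (\<forall>i < n. emp_utility u \<kappa> m T i \<omega> \<le> emp_utility u \<kappa> m T i\<^sub>s \<omega>) \<longrightarrow>
              exp_utility u (D i\<^sub>s) \<ge> Max ((\<lambda>i. exp_utility u (D i)) ` {..<n}) - \<epsilon>}
           \<ge> 1 - \<delta>
       \<and> 2 * sqrt (ln (2 * real n / \<delta>) / (2 * real m)) + u \<kappa> \<le> \<epsilon>"
proof -
  interpret prob_space M by (rule M_prob)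
  define L where "L = ln (2 * real n / \<delta>)"
  define c where "c = \<epsilon> - u \<kappa>"
  have c_pos: "c > 0" using kappa by (simp add: c_def)
  have L_pos: "L > 0" using n_pos delta by (simp add: L_def)
  define r where "r = 2 * L / c^2"
  have r_pos: "r > 0" using L_pos c_pos by (simp add: r_def)
  have m_ge: "real m \<ge> r" using m_def r_def L_def c_def
    by (metis of_nat_nat ceiling_correct ceiling_le_zero less_le_not_le not_le_imp_less r_pos)
  have m_pos: "m > 0" using m_ge r_pos by linarith
  define \<eta> where "\<eta> = sqrt (L / (2 * real m))"
  have eta_nn: "\<eta> \<ge> 0" using L_pos by (simp add: \<eta>_def)
  have eta2: "\<eta>^2 = L / (2 * real m)" using L_pos by (simp add: \<eta>_def)
  have "L / (2 * real m) \<le> L / (2 * r)"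
    using L_pos r_pos m_ge by (intro divide_left_mono) auto
  also have "L / (2 * r) = (c/2)^2" using L_pos c_pos by (simp add: r_def power2_eq_square field_simps)
  finally have "\<eta>^2 \<le> (c/2)^2" using eta2 by simp
  hence eta_le: "\<eta> \<le> c/2" using eta_nn c_pos by (meson power2_le_imp_le less_le_not_le zero_le_divide_iff zero_le_numeral)
  have part2: "2 * sqrt (ln (2 * real n / \<delta>) / (2 * real m)) + u \<kappa> \<le> \<epsilon>"
    using eta_le by (simp add: \<eta>_def L_def c_def)
  define g where "g = (\<lambda>t. u (min t \<kappa>))"
  have rs: "runtime_space = restrict_space borel {0..}" by (simp add: runtime_space_def)
  have u_meas: "u \<in> borel_measurable runtime_space"
  proof -
    have "mono_on {0..} (\<lambda>t. - u t)" using u_mono by (auto simp: mono_on_def)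
    hence "(\<lambda>t. - u t) \<in> borel_measurable runtime_space"
      unfolding rs by (rule borel_measurable_mono_on_fnc)
    hence "(\<lambda>t. - (- u t)) \<in> borel_measurable runtime_space" by measurable
    thus ?thesis by simp
  qed
  have g_meas: "g \<in> borel_measurable runtime_space"
  proof -
    have "mono_on {0..} (\<lambda>t. - g t)" using u_mono kappa(1)
      by (auto simp: mono_on_def g_def)
    hence "(\<lambda>t. - g t) \<in> borel_measurable runtime_space"
      unfolding rs by (rule borel_measurable_mono_on_fnc)
    hence "(\<lambda>t. - (- g t)) \<in> borel_measurable runtime_space" by measurable
    thus ?thesis by simp
  qed
  have g_bnd: "\<And>t. t \<ge> 0 \<Longrightarrow> 0 \<le> g t \<and> g t \<le> 1" using u_range kappa(1) by (simp add: g_def)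
  have rvT: "T i j \<in> measurable M runtime_space" if "i < n" "j < m" for i j
    using T_indep that unfolding indep_vars_def by force
  define C where "C i = (\<integral>t. g t \<partial>D i)" for i
  define U where "U i = exp_utility u (D i)" for i
  have CU: "U i \<le> C i \<and> C i \<le> U i + u \<kappa>" if i: "i < n" for i
  proof -
    interpret Di: prob_space "D i" using D_prob[OF i] .
    have sp: "space (D i) = {0..}" using sets_eq_imp_space_eq[OF D_sets[OF i]] by (simp add: space_runtime)
    have um: "u \<in> borel_measurable (D i)" using u_meas measurable_cong_sets[OF D_sets[OF i] refl] by blast
    have gm: "g \<in> borel_measurable (D i)" using g_meas measurable_cong_sets[OF D_sets[OF i] refl] by blast
    have ui: "integrable (D i) u"
      by (rule Di.integrable_const_bound[where B=1]) (auto intro!: AE_I2 simp: sp um abs_le_iff, (metis u_range order.trans neg_le_0_iff_le zero_le_one)+)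
    have gi: "integrable (D i) g"
      by (rule Di.integrable_const_bound[where B=1]) (auto intro!: AE_I2 simp: sp gm abs_le_iff, (metis g_bnd order.trans neg_le_0_iff_le zero_le_one)+)
    have ug: "u t \<le> g t \<and> g t \<le> u t + u \<kappa>" if "t \<ge> 0" for t
      using u_mono[of \<kappa> t] u_mono[of t \<kappa>] u_range[of t] u_range[of \<kappa>] that kappa(1)
      by (cases "t \<le> \<kappa>") (auto simp: g_def min_def)
    have "U i \<le> C i" unfolding U_def C_def exp_utility_def
      by (rule integral_mono[OF ui gi]) (use ug sp in auto)
    moreover have "C i \<le> (\<integral>t. u t + u \<kappa> \<partial>D i)" unfolding C_def
      by (rule integral_mono[OF gi]) (use ug sp ui in auto)
    moreover have "(\<integral>t. u t + u \<kappa> \<partial>D i) = U i + u \<kappa>"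
      using ui by (simp add: U_def exp_utility_def Di.prob_space)
    ultimately show ?thesis by simp
  qed
  define f where "f i \<omega> = (\<Sum>j<m. g (T i j \<omega>))" for i \<omega>
  have fm: "f i \<in> borel_measurable M" if "i < n" for i
    unfolding f_def by (intro borel_measurable_sum measurable_comp[OF rvT g_meas, unfolded comp_def] that) auto
  have Esum: "(\<Sum>j<m. expectation (\<lambda>\<omega>. g (T i j \<omega>))) = real m * C i" if "i < n" for i
  proof -
    have "expectation (\<lambda>\<omega>. g (T i j \<omega>)) = C i" if "j < m" for j
      unfolding C_def using T_distr[OF \<open>i < n\<close> that] integral_distr[OF rvT[OF \<open>i < n\<close> that] g_meas] by simp
    thus ?thesis by simp
  qed
  define B1 where "B1 i = {\<omega>\<in>space M. f i \<omega> \<ge> real m * C i + real m * \<eta>}" for i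
  define B2 where "B2 i = {\<omega>\<in>space M. f i \<omega> \<le> real m * C i - real m * \<eta>}" for i
  have expb: "exp (-2 * (real m * \<eta>)^2 / real m) = \<delta> / (2 * real n)"
  proof -
    have h: "real m * (2 * \<eta>^2) = L" using m_pos eta2 by (simp add: field_simps)
    have "-2 * (real m * \<eta>)^2 / real m = - L" using m_pos
      by (simp add: power_mult_distrib field_simps power2_eq_square flip: h)
    moreover have "exp (- L) = \<delta> / (2 * real n)" using n_pos delta
      by (simp add: L_def exp_minus inverse_eq_divide)
    ultimately show ?thesis by simp
  qed
  have meta: "real m * \<eta> \<ge> 0" using eta_nn by simp
  have pB1: "measure M (B1 i) \<le> \<delta> / (2 * real n)" if "i < n" for i
    using hoeff_one(1)[OF M_prob T_indep that m_pos g_meas g_bnd meta] Esum[OF that]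
    unfolding B1_def f_def expb by simp
  have pB2: "measure M (B2 i) \<le> \<delta> / (2 * real n)" if "i < n" for i
    using hoeff_one(2)[OF M_prob T_indep that m_pos g_meas g_bnd meta] Esum[OF that]
    unfolding B2_def f_def expb by simp
  have sB1: "B1 i \<in> sets M" if "i < n" for i using fm[OF that] unfolding B1_def by measurable
  have sB2: "B2 i \<in> sets M" if "i < n" for i using fm[OF that] unfolding B2_def by measurable
  define B where "B i = B1 i \<union> B2 i" for i
  have sB: "B ` {..<n} \<subseteq> sets M" using sB1 sB2 by (auto simp: B_def)
  have "measure M (\<Union>(B ` {..<n})) \<le> (\<Sum>i<n. measure M (B i))"
    by (rule finite_measure_subadditive_finite) (use sB in auto)
  also have "\<dots> \<le> (\<Sum>i<n. \<delta> / (2 * real n) + \<delta> / (2 * real n))"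
  proof (rule sum_mono)
    fix i assume "i \<in> {..<n}"
    hence i: "i < n" by simp
    have "measure M (B i) \<le> measure M (B1 i) + measure M (B2 i)"
      unfolding B_def by (rule measure_subadditive) (use sB1 sB2 i in auto)
    thus "measure M (B i) \<le> \<delta> / (2 * real n) + \<delta> / (2 * real n)" using pB1[OF i] pB2[OF i] by linarith
  qed
  also have "\<dots> = \<delta>" using n_pos by simp
  finally have pB: "measure M (\<Union>(B ` {..<n})) \<le> \<delta>" .
  define S where "S = {\<omega> \<in> space M. \<forall>i\<^sub>s < n.
              (\<forall>i < n. emp_utility u \<kappa> m T i \<omega> \<le> emp_utility u \<kappa> m T i\<^sub>s \<omega>) \<longrightarrow>
              exp_utility u (D i\<^sub>s) \<ge> Max ((\<lambda>i. exp_utility u (D i)) ` {..<n}) - \<epsilon>}"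
  have emp: "emp_utility u \<kappa> m T i \<omega> = f i \<omega> / real m" for i \<omega>
    by (simp add: emp_utility_def f_def g_def)
  have S_eq: "S = {\<omega> \<in> space M. \<forall>i\<^sub>s \<in> {..<n}.
              (\<forall>i \<in> {..<n}. f i \<omega> / real m \<le> f i\<^sub>s \<omega> / real m) \<longrightarrow>
              exp_utility u (D i\<^sub>s) \<ge> Max ((\<lambda>i. exp_utility u (D i)) ` {..<n}) - \<epsilon>}"
    unfolding S_def emp by auto
  have fm': "(\<lambda>\<omega>. f i \<omega> / real m) \<in> borel_measurable M" if "i < n" for i
    using fm[OF that] by measurable
  have S_sets: "S \<in> sets M" unfolding S_eq
    by (intro sets.sets_Collect_finite_All sets.sets_Collect_imp sets.sets_Collect_const borel_measurable_le fm') auto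
  have sub: "space M - \<Union>(B ` {..<n}) \<subseteq> S"
  proof
    fix \<omega> assume w: "\<omega> \<in> space M - \<Union>(B ` {..<n})"
    show "\<omega> \<in> S" unfolding S_eq
    proof (intro CollectI conjI ballI impI)
      show "\<omega> \<in> space M" using w by simp
      fix ist assume ist: "ist \<in> {..<n}" and best: "\<forall>i \<in> {..<n}. f i \<omega> / real m \<le> f ist \<omega> / real m"
      have ne: "(\<lambda>i. exp_utility u (D i)) ` {..<n} \<noteq> {}" using ist by auto
      obtain b where b: "b < n" "Max ((\<lambda>i. exp_utility u (D i)) ` {..<n}) = U b"
        using Max_in[OF _ ne] by (auto simp: U_def)
      have "\<omega> \<notin> B1 ist" using w ist by (auto simp: B_def)
      hence "f ist \<omega> < real m * C ist + real m * \<eta>" using w by (auto simp: B1_def)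
      hence e1: "f ist \<omega> / real m < C ist + \<eta>" using m_pos by (simp add: field_simps)
      have "\<omega> \<notin> B2 b" using w b by (auto simp: B_def)
      hence "f b \<omega> > real m * C b - real m * \<eta>" using w by (auto simp: B2_def)
      hence e2: "f b \<omega> / real m > C b - \<eta>" using m_pos by (simp add: field_simps)
      have e3: "f b \<omega> / real m \<le> f ist \<omega> / real m" using best b by auto
      have "U b - \<epsilon> \<le> U ist" using CU[of b] CU[of ist] ist b e1 e2 e3 eta_le c_def by auto
      thus "exp_utility u (D ist) \<ge> Max ((\<lambda>i. exp_utility u (D i)) ` {..<n}) - \<epsilon>"
        using b by (simp add: U_def)
    qed
  qed
  have "1 - \<delta> \<le> measure M (space M - \<Union>(B ` {..<n}))"
    using pB prob_compl[of "\<Union>(B ` {..<n})"] sB by auto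
  also have "\<dots> \<le> measure M S" by (rule finite_measure_mono[OF sub S_sets])
  finally show ?thesis using part2 unfolding S_def by simp
qed

end
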